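(* Let $\mathbf{d}^m=\{d_1,\ldots,d_m\}$ be positive integers and let $W(s,\mathbf{d}^m)$ be the restricted partition function, defined by $\prod_{i=1}^m \frac{1}{1-t^{d_i}}=\sum_{s\ge 0}W(s,\mathbf{d}^m)t^s$. Then $W(s,\mathbf{d}^m)=\sum_j W_j(s,\mathbf{d}^m)$, the sum running over all distinct positive integers $j$ dividing at least one $d_i$, where the $j$-periodic Sylvester wave is given explicitly by $$ W_j(s,\mathbf{d}^m)=\frac{1}{(m-1)!\,\pi_m\,j^{m-k_j}}\sum_{r_{k_j+1}=0}^{j-1}\cdots\sum_{r_m=0}^{j-1} B^{(m)}_{m-1}\Big(s+s_m+\sum_{i=k_j+1}^{m} d_i r_i\;\Big|\;\mathbf{d}^m_j\Big)\,\bar{\Psi}_j\Big(s+\sum_{i=k_j+1}^{m} d_i (r_i+1)\Big), $$ equivalently $$ W_j(s,\mathbf{d}^m)=\sum_{r_{k_j+1}=0}^{j-1}\cdots\sum_{r_m=0}^{j-1} W_1\Big(s-\sum_{i=k_j+1}^{m} d_i r_i,\;\mathbf{d}^m_j\Big)\,\bar{\Psi}_j\Big(s-\sum_{i=k_j+1}^{m} d_i r_i\Big), $$ with $W_1(s,\mathbf{d}^m)=\frac{1}{(m-1)!\,\pi_m}B^{(m)}_{m-1}(s+s_m\,|\,\mathbf{d}^m)$. Together with the formulas for $\bar{\Psi}_j$ below, this gives a completely explicit solution of the restricted partition problem as a finite sum of higher-order Bernoulli polynomials with periodic coefficients.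
   Context: Notation: $s_m=\sum_{i=1}^m d_i$, $\pi_m=\prod_{i=1}^m d_i$. The elements of $\mathbf{d}^m$ are ordered so that $j$ divides exactly the first $k_j$ of them, $d_1,\ldots,d_{k_j}$. The $j$-modified set is $\mathbf{d}^m_j=\{d_1,\ldots,d_{k_j}\}\cup\{jd_{k_j+1},\ldots,jd_m\}$. The Bernoulli polynomials of higher order $B^{(m)}_n(s\,|\,\mathbf{d}^m)$ are defined by $\frac{e^{st}t^m\prod_{i=1}^m d_i}{\prod_{i=1}^m(e^{d_it}-1)}=\sum_{n\ge0}B^{(m)}_n(s\,|\,\mathbf{d}^m)\frac{t^n}{n!}$. The prime radical circulator is $\bar{\Psi}_j(s)=\sum_{\rho_j}\rho_j^s$, the sum over primitive $j$-th roots of unity $\rho_j=e^{2\pi i n/j}$, $\gcd(n,j)=1$; for prime $j$, $\bar{\Psi}_j(s)=\phi(j)$ if $s\equiv0 \pmod j$ and $\mu(j)$ otherwise ($\phi$ Euler totient, $\mu$ Möbius function), and for $j=\prod_k p_k^{\alpha_k}$ and integer $s$, $\bar{\Psi}_j(s)=\prod_k p_k^{\alpha_k-1}\bar{\Psi}_{p_k}(s/p_k^{\alpha_k-1})$, with $\bar{\Psi}_p(x)=0$ for non-integer $x$. The Sylvester wave $W_j(s,\mathbf{d}^m)$ is (by Sylvester) the coefficient of $t^{-1}$ in the expansion of $\sum_{\rho_j}\frac{\rho_j^{-s}e^{st}}{\prod_{k=1}^m(1-\rho_j^{d_k}e^{-d_kt})}$. *)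

theory Defs
  imports "HOL-Complex_Analysis.Complex_Analysis" "HOL-Computational_Algebra.Formal_Power_Series"
begin

text \<open>The multiset d^m is represented by a function d :: nat => nat, restricted to indices i < m.\<close>

definition restricted_partition :: "(nat \<Rightarrow> nat) \<Rightarrow> nat \<Rightarrow> nat \<Rightarrow> complex" where
  "restricted_partition d m s =
     fps_nth (\<Prod>i<m. inverse (1 - fps_X ^ d i)) s"

text \<open>Higher-order Bernoulli polynomial B^(m)_n(x | d^m), via its generating function
  e^(xt) t^m prod d_i / prod (e^(d_i t) - 1) = e^(xt) * prod_i d_i / ((e^(d_i t) - 1)/t),
  where (e^(d t) - 1)/t is the formal power series fps_shift 1 (fps_exp d - 1).\<close>
definition bernoulli_higher :: "nat \<Rightarrow> real \<Rightarrow> (nat \<Rightarrow> nat) \<Rightarrow> nat \<Rightarrow> real" where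
  "bernoulli_higher n x d m =
     fact n * fps_nth (fps_exp x *
        (\<Prod>i<m. fps_const (real (d i)) * inverse (fps_shift 1 (fps_exp (real (d i)) - 1)))) n"

definition sum_d :: "(nat \<Rightarrow> nat) \<Rightarrow> nat \<Rightarrow> nat" where
  "sum_d d m = (\<Sum>i<m. d i)"

definition prod_d :: "(nat \<Rightarrow> nat) \<Rightarrow> nat \<Rightarrow> nat" where
  "prod_d d m = (\<Prod>i<m. d i)"

definition root_unity :: "nat \<Rightarrow> nat \<Rightarrow> complex" where
  "root_unity j n = exp (2 * of_real pi * \<i> * of_nat n / of_nat j)"

definition prim_idx :: "nat \<Rightarrow> nat set" where
  "prim_idx j = {n. n < j \<and> coprime n j}"

definition prime_radical_circulator :: "nat \<Rightarrow> int \<Rightarrow> complex" where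
  "prime_radical_circulator j s = (\<Sum>n\<in>prim_idx j. root_unity j n powi s)"

definition sylvester_wave :: "nat \<Rightarrow> int \<Rightarrow> (nat \<Rightarrow> nat) \<Rightarrow> nat \<Rightarrow> complex" where
  "sylvester_wave j s d m =
     residue (\<lambda>t. \<Sum>n\<in>prim_idx j. root_unity j n powi (- s) * exp (of_int s * t) /
                     (\<Prod>k<m. 1 - root_unity j n ^ d k * exp (- of_nat (d k) * t))) 0"

text \<open>Indices i < m with j not dividing d_i (i.e. the indices k_j+1..m after reordering).\<close>
definition nondiv_idx :: "nat \<Rightarrow> (nat \<Rightarrow> nat) \<Rightarrow> nat \<Rightarrow> nat set" where
  "nondiv_idx j d m = {i. i < m \<and> \<not> j dvd d i}"

definition modified_set :: "nat \<Rightarrow> (nat \<Rightarrow> nat) \<Rightarrow> nat \<Rightarrow> nat" where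
  "modified_set j d i = (if j dvd d i then d i else j * d i)"

definition W1 :: "real \<Rightarrow> (nat \<Rightarrow> nat) \<Rightarrow> nat \<Rightarrow> real" where
  "W1 s d m = bernoulli_higher (m - 1) (s + real (sum_d d m)) d m /
               (fact (m - 1) * real (prod_d d m))"

definition wave_indices :: "(nat \<Rightarrow> nat) \<Rightarrow> nat \<Rightarrow> nat set" where
  "wave_indices d m = {j. j > 0 \<and> (\<exists>i<m. j dvd d i)}"

definition wave_formula1 :: "nat \<Rightarrow> int \<Rightarrow> (nat \<Rightarrow> nat) \<Rightarrow> nat \<Rightarrow> complex" where
  "wave_formula1 j s d m =
     (let N = nondiv_idx j d m in
      1 / (of_real (fact (m - 1)) * of_nat (prod_d d m) * of_nat j ^ card N) *
      (\<Sum>r\<in>PiE N (\<lambda>_. {0..<j}).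
         of_real (bernoulli_higher (m - 1)
                    (real_of_int s + real (sum_d d m) + real (\<Sum>i\<in>N. d i * r i))
                    (modified_set j d) m) *
         prime_radical_circulator j (s + int (\<Sum>i\<in>N. d i * (r i + 1)))))"

definition wave_formula2 :: "nat \<Rightarrow> int \<Rightarrow> (nat \<Rightarrow> nat) \<Rightarrow> nat \<Rightarrow> complex" where
  "wave_formula2 j s d m =
     (let N = nondiv_idx j d m in
      (\<Sum>r\<in>PiE N (\<lambda>_. {0..<j}).
         of_real (W1 (real_of_int (s - int (\<Sum>i\<in>N. d i * r i))) (modified_set j d) m) *
         prime_radical_circulator j (s - int (\<Sum>i\<in>N. d i * r i))))"

end

theory Submission
  imports Defs
begin

lemma fls_res_inv_pow_deriv:
  fixes Gl :: "complex fls"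
  assumes "fls_subdegree Gl = 1" and k: "k \<ge> 1"
  shows "fls_residue (inverse (Gl ^ k) * fls_deriv Gl) = (if k = 1 then 1 else 0)"
proof -
  have Gl0: "Gl \<noteq> 0" using assms(1) by auto
  show ?thesis
  proof (cases "k = 1")
    case True
    then show ?thesis using fls_residue_deriv_times_inverse_eq_subdegree(2)[of Gl] assms(1) by simp
  next
    case False
    then obtain i where ki: "k = Suc (Suc i)" using k by (metis Suc_le_D Suc_le_lessD less_Suc_eq_0_disj not_less_eq_eq One_nat_def)
    define A where "A = Gl ^ Suc i"
    have "fls_deriv (inverse A) = - fls_deriv A * (inverse A)\<^sup>2" by (rule fls_inverse_deriv)
    also have "fls_deriv A = of_nat (Suc i) * Gl ^ i * fls_deriv Gl"
      unfolding A_def by (subst fls_deriv_power) simp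
    finally have eq0: "fls_deriv (inverse A) = - of_nat (Suc i) * (Gl ^ i * (inverse A)\<^sup>2 * fls_deriv Gl)"
      by (simp add: algebra_simps)
    have "A\<^sup>2 = Gl ^ i * Gl ^ k" unfolding A_def ki by (simp add: power2_eq_square power_add[symmetric])
    hence "(inverse A)\<^sup>2 = inverse (Gl ^ i) * inverse (Gl ^ k)"
      by (metis inverse_mult_distrib power_inverse)
    hence "Gl ^ i * (inverse A)\<^sup>2 = inverse (Gl ^ k)" using Gl0
      by (simp add: mult.assoc[symmetric])
    with eq0 have eq: "fls_deriv (inverse A) = - of_nat (Suc i) * (inverse (Gl ^ k) * fls_deriv Gl)"
      by simp
    have one: "fls_const (1 / of_nat (Suc i)) * (of_nat (Suc i) :: complex fls) = 1"
      by (simp add: fls_of_nat fls_const_mult_const del: of_nat_Suc)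
    have m1: "fls_const (- 1 / of_nat (Suc i)) = - fls_const (1 / of_nat (Suc i) :: complex)"
      by (metis fls_const_uminus minus_divide_left)
    have "fls_const (- 1 / of_nat (Suc i)) * fls_deriv (inverse A)
          = (fls_const (1 / of_nat (Suc i)) * (of_nat (Suc i) :: complex fls)) * (inverse (Gl ^ k) * fls_deriv Gl)"
      unfolding eq m1 by (simp only: mult_minus_left mult_minus_right minus_minus mult.assoc)
    hence "inverse (Gl ^ k) * fls_deriv Gl = fls_const (- 1 / of_nat (Suc i)) * fls_deriv (inverse A)"
      using one by simp
    then have "fls_residue (inverse (Gl ^ k) * fls_deriv Gl) = 0"
      by (simp only: fls_residue_fls_const_times fls_residue_deriv) simp
    then show ?thesis using False by simp
  qed
qed


lemma fls_res_compose:
  fixes F :: "complex fls" and G :: "complex fps"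
  assumes G0: "G $ 0 = 0" and G1: "G $ 1 \<noteq> 0"
  shows "fls_residue (fls_compose_fps F G * fps_to_fls (fps_deriv G)) = fls_residue F"
proof -
  define Gl where "Gl = fps_to_fls G"
  have Gnz: "G \<noteq> 0" using G1 by auto
  have "subdegree G = 1" using G0 G1 by (intro subdegreeI) auto
  hence sdG: "fls_subdegree Gl = 1" unfolding Gl_def by (simp add: fls_subdegree_fls_to_fps)
  have dG: "fps_to_fls (fps_deriv G) = fls_deriv Gl" unfolding Gl_def by (simp add: fls_deriv_fps_to_fls)
  have "\<forall>F. nat (- fls_subdegree F) = n \<longrightarrow>
          fls_residue (fls_compose_fps F G * fls_deriv Gl) = fls_residue F" for n
  proof (induction n rule: less_induct)
    case (less n)
    show ?case
    proof (intro allI impI)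
      fix F :: "complex fls"
      assume n: "nat (- fls_subdegree F) = n"
      show "fls_residue (fls_compose_fps F G * fls_deriv Gl) = fls_residue F"
      proof (cases "fls_subdegree F \<ge> 0")
        case True
        hence F: "F = fps_to_fls (fls_regpart F)" by (simp add: fls_regpart_to_fls_trivial)
        have "fls_compose_fps F G * fls_deriv Gl = fps_to_fls ((fls_regpart F oo G) * fps_deriv G)"
          by (subst F) (simp add: fls_compose_fps_to_fls Gnz G0 dG[symmetric] fls_times_fps_to_fls)
        moreover have "fls_residue F = 0" using True by (simp add: fls_eq0_below_subdegree)
        ultimately show ?thesis by simp
      next
        case False
        define k where "k = nat (- fls_subdegree F)"
        have k1: "k \<ge> 1" and sdF: "fls_subdegree F = - int k" using False unfolding k_def by auto
        define c where "c = fls_nth F (- int k)"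
        define F' where "F' = F - fls_const c * fls_X_inv ^ k"
        have nth': "fls_nth F' i = (if i = - int k then 0 else fls_nth F i)" for i
          unfolding F'_def c_def by (simp add: fls_X_inv_power_nth)
        have lessk: "nat (- fls_subdegree F') < k"
        proof (cases "F' = 0")
          case True then show ?thesis using k1 by simp
        next
          case False
          have "- int k < fls_subdegree F'"
          proof (rule fls_subdegree_greaterI[OF False])
            fix i :: int assume "i \<le> - int k"
            thus "fls_nth F' i = 0" using sdF by (cases "i = - int k") (auto simp: nth' fls_eq0_below_subdegree)
          qed
          thus ?thesis using k1 by linarith
        qed
        have IH: "fls_residue (fls_compose_fps F' G * fls_deriv Gl) = fls_residue F'"
          using less.IH[of "nat (- fls_subdegree F')"] lessk n k_def by blast
        have FF: "F = F' + fls_const c * fls_X_inv ^ k" unfolding F'_def by simp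
        have cX: "fls_compose_fps (fls_const c * fls_X_inv ^ k) G = fls_const c * inverse (Gl ^ k)"
          by (simp add: fls_compose_fps_mult fls_compose_fps_power fls_compose_fps_inverse
                fls_inverse_X[symmetric] Gnz G0 Gl_def power_inverse)
        have r1: "fls_residue (fls_compose_fps (fls_const c * fls_X_inv ^ k) G * fls_deriv Gl)
                  = c * (if k = 1 then 1 else 0)"
          unfolding cX using fls_res_inv_pow_deriv[OF sdG k1]
          by (simp only: mult.assoc fls_residue_fls_const_times)
        have r2: "fls_residue (fls_const c * fls_X_inv ^ k) = c * (if k = 1 then 1 else 0)"
          by (simp only: fls_residue_fls_const_times) (simp add: fls_X_inv_power_nth)
        show ?thesis
          apply (subst (1 2) FF)
          apply (simp only: fls_compose_fps_add[OF Gnz G0] distrib_right fls_residue_add IH r1 r2)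
          done
      qed
    qed
  qed
  thus ?thesis using dG by auto
qed


lemma residue_change_var:
  fixes f g g' :: "complex \<Rightarrow> complex" and G :: "complex fps"
  assumes F: "(\<lambda>x. f (z + x)) has_laurent_expansion F"
    and G: "g has_fps_expansion G" "G $ 0 = 0" "G $ 1 \<noteq> 0"
    and G': "g' has_fps_expansion fps_deriv G"
  shows "residue (\<lambda>t. f (z + g t) * g' t) 0 = residue f z"
proof -
  have Gnz: "G \<noteq> 0" using G(3) by auto
  have c: "((\<lambda>x. f (z + x)) \<circ> g) has_laurent_expansion fls_compose_fps F G"
    by (rule has_laurent_expansion_compose[OF F has_laurent_expansion_fps[OF G(1)] G(2) Gnz])
  have p: "(\<lambda>t. f (z + g t) * g' t) has_laurent_expansion
             (fls_compose_fps F G * fps_to_fls (fps_deriv G))"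
    using has_laurent_expansion_mult[OF c has_laurent_expansion_fps[OF G']] by (simp add: o_def)
  show ?thesis
    using has_laurent_expansion_residue_0[OF p] fls_res_compose[OF G(2,3), of F]
          has_laurent_expansion_residue[OF F] by simp
qed

definition cfps :: "real fps \<Rightarrow> complex fps" where
  "cfps F = Abs_fps (\<lambda>n. of_real (F $ n))"

lemma cfps_nth [simp]: "cfps F $ n = of_real (F $ n)"
  by (simp add: cfps_def)

lemma cfps_mult: "cfps (A * B) = cfps A * cfps B"
  by (simp add: fps_eq_iff fps_mult_nth)

lemma cfps_one: "cfps 1 = 1"
  by (simp add: fps_eq_iff)

lemma cfps_const: "cfps (fps_const c) = fps_const (of_real c)"
  by (simp add: fps_eq_iff)

lemma cfps_diff: "cfps (A - B) = cfps A - cfps B"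
  by (simp add: fps_eq_iff)

lemma cfps_prod: "cfps (\<Prod>i\<in>I. f i) = (\<Prod>i\<in>I. cfps (f i))"
  by (induction I rule: infinite_finite_induct) (auto simp: cfps_one cfps_mult)

lemma cfps_inverse:
  fixes A :: "real fps"
  assumes "A $ 0 \<noteq> 0"
  shows "cfps (inverse A) = inverse (cfps A)"
proof -
  have "cfps A * cfps (inverse A) = 1"
    using assms by (simp add: cfps_mult[symmetric] inverse_mult_eq_1' cfps_one)
  thus ?thesis by (simp add: fps_inverse_unique)
qed

lemma cfps_exp: "cfps (fps_exp x) = fps_exp (of_real x)"
  by (simp add: fps_eq_iff fps_exp_nth)

lemma cfps_shift: "cfps (fps_shift k A) = fps_shift k (cfps A)"
  by (simp add: fps_eq_iff)

lemma fps_X_shift1: "fps_nth (f :: 'a::comm_ring_1 fps) 0 = 0 \<Longrightarrow> fps_X * fps_shift 1 f = f"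
  by (simp add: fps_eq_iff fps_X_mult_nth)


lemma fps_const_prod': "fps_const (\<Prod>i\<in>I. f i) = (\<Prod>i\<in>I. fps_const (f i) :: 'a::comm_ring_1 fps)"
  by (induction I rule: infinite_finite_induct) (auto simp: fps_const_mult[symmetric])

lemma fps_to_fls_prod: "fps_to_fls (\<Prod>i\<in>I. f i) = (\<Prod>i\<in>I. fps_to_fls (f i))"
  by (induction I rule: infinite_finite_induct) (auto simp: fls_times_fps_to_fls)

lemma fps_exp_sum: "(\<Prod>i\<in>I. fps_exp (f i)) = fps_exp (\<Sum>i\<in>I. f i :: 'a :: field_char_0)"
  by (induction I rule: infinite_finite_induct) (auto simp: fps_exp_add_mult)

lemma inv_factor:
  fixes c :: complex
  assumes "c \<noteq> 0"
  shows "inverse (1 - fps_to_fls (fps_exp (- c))) =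
           fls_X_inv * fps_to_fls (fps_exp c * inverse (fps_shift 1 (fps_exp c - 1)))"
proof -
  define S where "S = fps_shift 1 (fps_exp c - 1)"
  have S0: "fps_nth S 0 = c" unfolding S_def by simp
  have ee: "fps_exp (- c) * fps_exp c = 1"
    by (simp flip: fps_exp_add_mult)
  have "1 - fps_exp (- c) = fps_exp (- c) * (fps_exp c - 1)"
    using ee by (simp add: algebra_simps)
  also have "fps_exp c - 1 = fps_X * S"
    unfolding S_def by (rule fps_X_shift1[symmetric]) simp
  finally have eq: "1 - fps_exp (- c) = fps_X * (fps_exp (- c) * S)" by (simp add: algebra_simps)
  define U where "U = fps_exp (- c) * S"
  have U0: "fps_nth U 0 \<noteq> 0" unfolding U_def using S0 assms by simp
  hence sdU: "subdegree U = 0" by (simp add: subdegree_eq_0_iff)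
  have "1 - fps_to_fls (fps_exp (- c)) = fls_X * fps_to_fls U"
    using arg_cong[OF eq, of fps_to_fls] unfolding U_def[symmetric]
    by (simp add: fls_times_fps_to_fls)
  hence "inverse (1 - fps_to_fls (fps_exp (- c))) = fls_X_inv * fps_to_fls (inverse U)"
    by (simp add: fls_inverse_fps_to_fls[OF sdU] fls_inverse_X)
  also have "inverse U = fps_exp c * inverse S"
    unfolding U_def by (simp add: fps_inverse_mult fps_exp_neg fps_inverse_idempotent)
  finally show ?thesis unfolding S_def .
qed


lemma fls_residue_Xinv_pow:
  assumes "m \<ge> 1"
  shows "fls_residue (fls_X_inv ^ m * fps_to_fls P) = fps_nth P (m - 1)"
proof -
  have "nat (int m - 1) = m - 1" using assms by (cases m) auto
  thus ?thesis using assms by (simp add: fls_X_inv_power_times_conv_shift(1))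
qed

lemma K_res:
  fixes e :: "nat \<Rightarrow> nat" and y :: real
  assumes m: "m \<ge> 1" and e: "\<And>i. i < m \<Longrightarrow> e i > 0"
  shows "fls_residue (fps_to_fls (fps_exp (of_real y)) *
           (\<Prod>k<m. inverse (1 - fps_to_fls (fps_exp (- of_nat (e k)))))) = (of_real (W1 y e m) :: complex)"
proof -
  define S where "S k = fps_shift 1 (fps_exp (of_nat (e k)) - 1 :: complex fps)" for k
  define SR where "SR k = fps_shift 1 (fps_exp (real (e k)) - 1)" for k
  define P where "P = fps_exp (of_real y + of_nat (sum_d e m)) * (\<Prod>k<m. inverse (S k))"
  have "(\<Prod>k<m. inverse (1 - fps_to_fls (fps_exp (- of_nat (e k)))))
        = (\<Prod>k<m. fls_X_inv * fps_to_fls (fps_exp (of_nat (e k)) * inverse (S k)))"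
    using e by (intro prod.cong refl) (auto simp: S_def inv_factor)
  also have "\<dots> = fls_X_inv ^ m * fps_to_fls (\<Prod>k<m. fps_exp (of_nat (e k)) * inverse (S k))"
    by (simp add: prod.distrib fps_to_fls_prod fls_times_fps_to_fls)
  finally have "fps_to_fls (fps_exp (of_real y)) *
           (\<Prod>k<m. inverse (1 - fps_to_fls (fps_exp (- of_nat (e k)))))
        = fls_X_inv ^ m * fps_to_fls (fps_exp (of_real y) * (\<Prod>k<m. fps_exp (of_nat (e k)) * inverse (S k)))"
    by (simp add: fls_times_fps_to_fls algebra_simps)
  also have "fps_exp (of_real y) * (\<Prod>k<m. fps_exp (of_nat (e k)) * inverse (S k)) = P"
    unfolding P_def prod.distrib fps_exp_sum sum_d_def
    by (simp add: fps_exp_add_mult mult.assoc)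
  finally have lhs: "fls_residue (fps_to_fls (fps_exp (of_real y)) *
           (\<Prod>k<m. inverse (1 - fps_to_fls (fps_exp (- of_nat (e k)))))) = fps_nth P (m - 1)"
    using fls_residue_Xinv_pow[OF m] by simp
  define PR where "PR = fps_exp (y + real (sum_d e m)) *
        (\<Prod>i<m. fps_const (real (e i)) * inverse (fps_shift 1 (fps_exp (real (e i)) - 1)))"
  have bh: "bernoulli_higher (m - 1) (y + real (sum_d e m)) e m = fact (m - 1) * fps_nth PR (m - 1)"
    unfolding bernoulli_higher_def PR_def ..
  have SR0: "i < m \<Longrightarrow> fps_nth (fps_shift 1 (fps_exp (real (e i)) - 1)) 0 \<noteq> 0" for i
    using e[of i] by simp
  have cS: "cfps (fps_shift 1 (fps_exp (real (e i)) - 1)) = S i" for i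
    unfolding S_def by (simp add: cfps_shift cfps_diff cfps_exp cfps_one)
  have cS': "cfps (fps_shift (Suc 0) (fps_exp (real (e i)) - 1)) = S i" for i
    using cS[of i] by simp
  have "cfps PR = fps_exp (of_real y + of_nat (sum_d e m)) *
          (\<Prod>i<m. fps_const (of_nat (e i)) * inverse (S i))"
    unfolding PR_def cfps_mult cfps_prod cfps_exp
    using SR0 by (simp add: cfps_mult cfps_const cfps_inverse cS cS')
  also have "\<dots> = fps_const (of_nat (prod_d e m)) * P"
    unfolding P_def prod_d_def prod.distrib by (simp add: fps_const_prod' algebra_simps)
  finally have cPR: "cfps PR = fps_const (of_nat (prod_d e m)) * P" .
  have pd: "prod_d e m \<noteq> 0" unfolding prod_d_def using e by auto
  have "of_real (W1 y e m) = of_real (fps_nth PR (m - 1)) / (of_nat (prod_d e m) :: complex)"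
    unfolding W1_def bh by (simp add: field_simps)
  also have "of_real (fps_nth PR (m - 1)) = fps_nth (cfps PR) (m - 1)" by simp
  also have "\<dots> = of_nat (prod_d e m) * fps_nth P (m - 1)" unfolding cPR by simp
  finally show ?thesis using lhs pd by simp
qed

definition E :: "complex \<Rightarrow> complex fls" where
  "E c = fps_to_fls (fps_exp c)"

lemma E_mult: "E a * E b = E (a + b)"
  by (simp add: E_def fls_times_fps_to_fls fps_exp_add_mult)

lemma E_power: "E a ^ n = E (of_nat n * a)"
  by (simp add: E_def fps_to_fls_power[symmetric] fps_exp_power_mult)

lemma E_0 [simp]: "E 0 = 1"
  by (simp add: E_def)

lemma E_prod: "(\<Prod>i\<in>I. E (f i)) = E (\<Sum>i\<in>I. f i)"
  by (induction I rule: infinite_finite_induct) (auto simp: E_mult[symmetric])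

lemma E_nth1: "fls_nth (E c) 1 = c"
  by (simp add: E_def)

lemma one_minus_E_nz: "c \<noteq> 0 \<Longrightarrow> 1 - E c \<noteq> 0"
proof
  assume "c \<noteq> 0" "1 - E c = 0"
  hence "fls_nth (1 - E c) 1 = 0" by simp
  thus False using \<open>c \<noteq> 0\<close> by (simp add: E_nth1)
qed

lemma geom_factor:
  fixes a :: complex and c :: complex
  assumes "a ^ j = 1" "j \<ge> 1" "c \<noteq> 0"
  shows "inverse (1 - fls_const a * E (- c)) =
           (\<Sum>r\<in>{0..<j}. fls_const (a ^ r) * E (- (of_nat r * c))) * inverse (1 - E (- (of_nat j * c)))"
proof -
  define x where "x = fls_const a * E (- c)"
  have xp: "x ^ r = fls_const (a ^ r) * E (- (of_nat r * c))" for r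
    unfolding x_def by (simp add: power_mult_distrib E_power fls_const_power)
  have "1 - x ^ j = (1 - x) * (\<Sum>r<j. x ^ r)" by (rule one_diff_power_eq)
  moreover have "x ^ j = E (- (of_nat j * c))" using xp[of j] assms(1) by simp
  ultimately have eq: "1 - E (- (of_nat j * c)) = (1 - x) * (\<Sum>r\<in>{0..<j}. fls_const (a ^ r) * E (- (of_nat r * c)))"
    by (simp only: xp atLeast0LessThan)
  have nz: "1 - E (- (of_nat j * c)) \<noteq> 0" using assms by (intro one_minus_E_nz) auto
  with eq have "1 - x \<noteq> 0" by auto
  from eq nz this show ?thesis unfolding x_def[symmetric]
    by (simp add: field_simps)
qed


lemma exp_laurent: "(\<lambda>t. exp (c * t)) has_laurent_expansion E c"
  unfolding E_def by (intro has_laurent_expansion_fps has_fps_expansion_exp)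

definition sylv_term :: "complex \<Rightarrow> int \<Rightarrow> (nat \<Rightarrow> nat) \<Rightarrow> nat \<Rightarrow> complex \<Rightarrow> complex" where
  "sylv_term \<rho> s d m t = \<rho> powi (- s) * exp (of_int s * t) /
      (\<Prod>k<m. 1 - \<rho> ^ d k * exp (- of_nat (d k) * t))"

definition sylv_fls :: "complex \<Rightarrow> int \<Rightarrow> (nat \<Rightarrow> nat) \<Rightarrow> nat \<Rightarrow> complex fls" where
  "sylv_fls \<rho> s d m = fls_const (\<rho> powi (- s)) * E (of_int s) /
      (\<Prod>k<m. 1 - fls_const (\<rho> ^ d k) * E (- of_nat (d k)))"

lemma sylv_laurent: "sylv_term \<rho> s d m has_laurent_expansion sylv_fls \<rho> s d m"
  unfolding sylv_term_def[abs_def] sylv_fls_def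
  by (intro laurent_expansion_intros exp_laurent)

lemma sylvester_wave_eq:
  "sylvester_wave j s d m = (\<Sum>n\<in>prim_idx j. fls_residue (sylv_fls (root_unity j n) s d m))"
proof -
  have "(\<lambda>t. \<Sum>n\<in>prim_idx j. sylv_term (root_unity j n) s d m t) has_laurent_expansion
          (\<Sum>n\<in>prim_idx j. sylv_fls (root_unity j n) s d m)"
    by (intro has_laurent_expansion_sum sylv_laurent)
  from has_laurent_expansion_residue_0[OF this] show ?thesis
    unfolding sylvester_wave_def sylv_term_def by (simp add: fls_nth_sum)
qed


definition Kf :: "nat \<Rightarrow> (nat \<Rightarrow> nat) \<Rightarrow> nat \<Rightarrow> int \<Rightarrow> complex fls" where
  "Kf j d m y = E (of_int y) * (\<Prod>k<m. inverse (1 - E (- of_nat (modified_set j d k))))"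

lemma fls_const_prod': "fls_const (\<Prod>i\<in>I. f i) = (\<Prod>i\<in>I. fls_const (f i) :: complex fls)"
  by (induction I rule: infinite_finite_induct) (auto simp: fls_const_mult_const[symmetric])

lemma sylv_fls_expand:
  fixes \<rho> :: complex
  assumes j: "j \<ge> 1" "\<rho> ^ j = 1" and d: "\<And>i. i < m \<Longrightarrow> d i > 0"
  shows "sylv_fls \<rho> s d m = (\<Sum>r\<in>PiE (nondiv_idx j d m) (\<lambda>_. {0..<j}).
            fls_const (\<rho> powi (- (s - int (\<Sum>i\<in>nondiv_idx j d m. d i * r i)))) *
            Kf j d m (s - int (\<Sum>i\<in>nondiv_idx j d m. d i * r i)))"
proof -
  define N where "N = nondiv_idx j d m"
  have Nsub: "N \<subseteq> {..<m}" unfolding N_def nondiv_idx_def by auto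
  have finN: "finite N" using Nsub finite_subset by blast
  have rho0: "\<rho> \<noteq> 0" using j by (metis power_0_left zero_neq_one not_one_le_zero)
  define Pi' where "Pi' = (\<Prod>k<m. inverse (1 - E (- of_nat (modified_set j d k))))"
  define A where "A k = (if k \<in> N then (\<Sum>r\<in>{0..<j}. fls_const ((\<rho> ^ d k) ^ r) * E (- (of_nat r * of_nat (d k))))
                          else 1)" for k
  have fac: "inverse (1 - fls_const (\<rho> ^ d k) * E (- of_nat (d k))) =
               A k * inverse (1 - E (- of_nat (modified_set j d k)))" if k: "k < m" for k
  proof (cases "k \<in> N")
    case True
    hence mk: "modified_set j d k = j * d k" unfolding N_def nondiv_idx_def modified_set_def by auto
    have "(\<rho> ^ d k) ^ j = 1" using j(2) by (metis power_mult power_mult_distrib mult.commute power_one)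
    from geom_factor[OF this j(1), of "of_nat (d k)"] d[OF k] True show ?thesis
      unfolding A_def mk by simp
  next
    case False
    hence dv: "j dvd d k" and mk: "modified_set j d k = d k"
      using k unfolding N_def nondiv_idx_def modified_set_def by auto
    from dv obtain q where "d k = j * q" by blast
    hence "\<rho> ^ d k = 1" using j(2) by (simp add: power_mult)
    thus ?thesis using False unfolding A_def mk by simp
  qed
  have "sylv_fls \<rho> s d m = fls_const (\<rho> powi (- s)) * E (of_int s) *
          (\<Prod>k<m. inverse (1 - fls_const (\<rho> ^ d k) * E (- of_nat (d k))))"
    unfolding sylv_fls_def by (simp add: divide_inverse prod_inversef[symmetric] o_def)
  also have "(\<Prod>k<m. inverse (1 - fls_const (\<rho> ^ d k) * E (- of_nat (d k)))) = (\<Prod>k<m. A k) * Pi'"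
    unfolding Pi'_def prod.distrib[symmetric] by (intro prod.cong refl) (simp add: fac)
  also have "(\<Prod>k<m. A k) = (\<Prod>k\<in>N. A k)"
    using Nsub by (intro prod.mono_neutral_right) (auto simp: A_def)
  also have "\<dots> = (\<Prod>k\<in>N. \<Sum>r\<in>{0..<j}. fls_const ((\<rho> ^ d k) ^ r) * E (- (of_nat r * of_nat (d k))))"
    by (intro prod.cong refl) (simp add: A_def)
  also have "\<dots> = (\<Sum>r\<in>PiE N (\<lambda>_. {0..<j}). \<Prod>k\<in>N. fls_const ((\<rho> ^ d k) ^ r k) * E (- (of_nat (r k) * of_nat (d k))))"
    by (rule prod_sum_PiE) (use finN in auto)
  also have "\<dots> = (\<Sum>r\<in>PiE N (\<lambda>_. {0..<j}). fls_const (\<rho> ^ (\<Sum>i\<in>N. d i * r i)) * E (- of_nat (\<Sum>i\<in>N. d i * r i)))"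
  proof (intro sum.cong refl)
    fix r
    have "(\<Prod>k\<in>N. fls_const ((\<rho> ^ d k) ^ r k)) = fls_const (\<rho> ^ (\<Sum>i\<in>N. d i * r i))"
      by (simp add: fls_const_prod' power_sum power_mult)
    moreover have "(\<Prod>k\<in>N. E (- (of_nat (r k) * of_nat (d k)))) = E (- of_nat (\<Sum>i\<in>N. d i * r i))"
      by (simp add: E_prod sum_negf mult.commute)
    ultimately show "(\<Prod>k\<in>N. fls_const ((\<rho> ^ d k) ^ r k) * E (- (of_nat (r k) * of_nat (d k)))) =
       fls_const (\<rho> ^ (\<Sum>i\<in>N. d i * r i)) * E (- of_nat (\<Sum>i\<in>N. d i * r i))"
      by (simp add: prod.distrib)
  qed
  finally have "sylv_fls \<rho> s d m = (\<Sum>r\<in>PiE N (\<lambda>_. {0..<j}).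
      fls_const (\<rho> powi (- s)) * E (of_int s) * (fls_const (\<rho> ^ (\<Sum>i\<in>N. d i * r i)) * E (- of_nat (\<Sum>i\<in>N. d i * r i))) * Pi')"
    by (simp only: sum_distrib_left sum_distrib_right mult.assoc)
  also have "\<dots> = (\<Sum>r\<in>PiE N (\<lambda>_. {0..<j}).
            fls_const (\<rho> powi (- (s - int (\<Sum>i\<in>N. d i * r i)))) *
            Kf j d m (s - int (\<Sum>i\<in>N. d i * r i)))"
  proof (intro sum.cong refl)
    fix r
    define R where "R = (\<Sum>i\<in>N. d i * r i)"
    have c: "\<rho> powi (- s) * \<rho> ^ R = \<rho> powi (- (s - int R))"
    proof -
      have "\<rho> powi (- (s - int R)) = \<rho> powi (- s + int R)" by (simp add: algebra_simps)
      also have "\<dots> = \<rho> powi (- s) * \<rho> powi (int R)" using rho0 by (rule power_int_add[OF disjI1])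
      finally show ?thesis by simp
    qed
    have e: "E (of_int s) * E (- of_nat R) = E (of_int (s - int R))"
      by (simp add: E_mult)
    show "fls_const (\<rho> powi (- s)) * E (of_int s) * (fls_const (\<rho> ^ R) * E (- of_nat R)) * Pi' =
          fls_const (\<rho> powi (- (s - int R))) * Kf j d m (s - int R)"
      unfolding Kf_def Pi'_def[symmetric] c[symmetric] e[symmetric] fls_const_mult_const[symmetric]
      by (simp only: mult_ac)
  qed
  finally show ?thesis unfolding N_def .
qed

lemma root_unity_pow: "j \<ge> 1 \<Longrightarrow> root_unity j n ^ j = 1"
  unfolding root_unity_def by (rule complex_root_unity) simp

lemma root_unity_nz [simp]: "root_unity j n \<noteq> 0"
  unfolding root_unity_def by simp

lemma root_powi_period:
  assumes "j \<ge> 1"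
  shows "root_unity j n powi (x + int j * c) = root_unity j n powi x"
proof -
  have "root_unity j n powi (int j * c) = (root_unity j n powi int j) powi c"
    by (simp add: power_int_mult)
  also have "root_unity j n powi int j = 1" using root_unity_pow[OF assms] by simp
  finally show ?thesis by (simp add: power_int_add)
qed

lemma psi_period:
  assumes "j \<ge> 1"
  shows "prime_radical_circulator j (x + int j * c) = prime_radical_circulator j x"
  unfolding prime_radical_circulator_def using root_powi_period[OF assms] by simp

lemma root_unity_inv:
  assumes "j \<ge> 1" "n \<le> j"
  shows "root_unity j (j - n) = inverse (root_unity j n)"
proof -
  have "root_unity j (j - n) * root_unity j n = exp (2 * of_real pi * \<i> * (of_nat (j - n) + of_nat n) / of_nat j)"
    unfolding root_unity_def by (simp add: exp_add[symmetric] add_divide_distrib distrib_left)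
  also have "of_nat (j - n) + of_nat n = (of_nat j :: complex)" using assms by (simp add: of_nat_diff)
  also have "exp (2 * of_real pi * \<i> * of_nat j / of_nat j) = 1" using assms by simp
  finally show ?thesis by (simp add: field_simps)
qed

lemma prim_idx_flip:
  assumes "n \<in> prim_idx j" "j \<ge> 1"
  shows "(j - n) mod j \<in> prim_idx j" "(j - (j - n) mod j) mod j = n"
    "root_unity j ((j - n) mod j) = inverse (root_unity j n)"
proof -
  have nj: "n < j" and cop: "coprime n j" using assms unfolding prim_idx_def by auto
  show "(j - (j - n) mod j) mod j = n"
    using nj by (metis diff_diff_cancel diff_less diff_zero mod_if not_gr0 not_less0 order.strict_iff_order)
  have "coprime (j - n) j"
    using cop nj by (simp add: coprime_iff_gcd_eq_1 gcd_diff2_nat)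
  hence "coprime ((j - n) mod j) j"
    by (metis mod_by_0 coprime_mod_left_iff)
  thus "(j - n) mod j \<in> prim_idx j" unfolding prim_idx_def using assms by auto
  have "root_unity j ((j - n) mod j) = root_unity j (j - n)"
    unfolding root_unity_def by (rule complex_root_unity_eq[of j "(j-n) mod j" "j-n", THEN iffD2]) (use assms in auto)
  also have "\<dots> = inverse (root_unity j n)" using root_unity_inv[OF assms(2)] nj by simp
  finally show "root_unity j ((j - n) mod j) = inverse (root_unity j n)" .
qed

lemma psi_neg:
  assumes j: "j \<ge> 1"
  shows "(\<Sum>n\<in>prim_idx j. root_unity j n powi (- y)) = prime_radical_circulator j y"
  unfolding prime_radical_circulator_def
proof (rule sum.reindex_bij_witness[of _ "\<lambda>n. (j - n) mod j" "\<lambda>n. (j - n) mod j"])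
  fix n assume n: "n \<in> prim_idx j"
  show "(j - (j - n) mod j) mod j = n" "(j - (j - n) mod j) mod j = n"
    "(j - n) mod j \<in> prim_idx j" "(j - n) mod j \<in> prim_idx j"
    using prim_idx_flip[OF n j] by auto
  show "root_unity j ((j - n) mod j) powi y = root_unity j n powi - y"
    using prim_idx_flip(3)[OF n j] by (simp add: power_int_minus power_int_inverse)
qed


lemma modified_pos: "j \<ge> 1 \<Longrightarrow> d i > 0 \<Longrightarrow> modified_set j d i > 0"
  unfolding modified_set_def by auto

lemma Kf_res:
  assumes "m \<ge> 1" "j \<ge> 1" "\<And>i. i < m \<Longrightarrow> d i > 0"
  shows "fls_residue (Kf j d m y) = of_real (W1 (real_of_int y) (modified_set j d) m)"
  using K_res[of m "modified_set j d" "real_of_int y"] assms modified_pos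
  unfolding Kf_def E_def by simp

lemma wave2:
  assumes j: "j \<ge> 1" and m: "m \<ge> 1" and d: "\<And>i. i < m \<Longrightarrow> d i > 0"
  shows "sylvester_wave j s d m = wave_formula2 j s d m"
proof -
  define N where "N = nondiv_idx j d m"
  define Y where "Y r = s - int (\<Sum>i\<in>N. d i * r i)" for r
  have "sylvester_wave j s d m = (\<Sum>n\<in>prim_idx j. fls_residue (sylv_fls (root_unity j n) s d m))"
    by (rule sylvester_wave_eq)
  also have "\<dots> = (\<Sum>n\<in>prim_idx j. \<Sum>r\<in>PiE N (\<lambda>_. {0..<j}).
                 root_unity j n powi (- Y r) * of_real (W1 (real_of_int (Y r)) (modified_set j d) m))"
  proof (intro sum.cong refl)
    fix n
    show "fls_residue (sylv_fls (root_unity j n) s d m) = (\<Sum>r\<in>PiE N (\<lambda>_. {0..<j}).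
                 root_unity j n powi (- Y r) * of_real (W1 (real_of_int (Y r)) (modified_set j d) m))"
    proof -
      have ex: "sylv_fls (root_unity j n) s d m = (\<Sum>r\<in>PiE N (\<lambda>_. {0..<j}).
            fls_const (root_unity j n powi (- Y r)) * Kf j d m (Y r))"
        unfolding N_def Y_def by (rule sylv_fls_expand[OF j root_unity_pow[OF j]]) (rule d)
      have kr: "fls_residue (Kf j d m y) = of_real (W1 (real_of_int y) (modified_set j d) m)" for y
        by (rule Kf_res[OF m j]) (rule d)
      show ?thesis unfolding ex fls_residue_def fls_nth_sum
        using kr by (simp add: fls_residue_def)
    qed
  qed
  also have "\<dots> = (\<Sum>r\<in>PiE N (\<lambda>_. {0..<j}). (\<Sum>n\<in>prim_idx j. root_unity j n powi (- Y r)) *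
                 of_real (W1 (real_of_int (Y r)) (modified_set j d) m))"
    by (subst sum.swap) (simp add: sum_distrib_right)
  also have "\<dots> = wave_formula2 j s d m"
    unfolding wave_formula2_def Let_def N_def[symmetric] Y_def[symmetric] psi_neg[OF j]
    by (simp add: mult.commute)
  finally show ?thesis .
qed


lemma prod_modified:
  "prod_d (modified_set j d) m = prod_d d m * j ^ card (nondiv_idx j d m)"
proof -
  define N where "N = nondiv_idx j d m"
  have Nsub: "N \<subseteq> {..<m}" unfolding N_def nondiv_idx_def by auto
  have "prod_d (modified_set j d) m = (\<Prod>i<m. d i * (if i \<in> N then j else 1))"
    unfolding prod_d_def modified_set_def N_def nondiv_idx_def by (intro prod.cong) auto
  also have "\<dots> = prod_d d m * (\<Prod>i<m. if i \<in> N then j else 1)"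
    unfolding prod_d_def prod.distrib ..
  also have "(\<Prod>i<m. if i \<in> N then j else 1) = (\<Prod>i\<in>N. if i \<in> N then j else 1)"
    using Nsub by (intro prod.mono_neutral_right) auto
  also have "\<dots> = j ^ card N" by simp
  finally show ?thesis unfolding N_def .
qed

lemma sum_modified:
  assumes "j \<ge> 1"
  shows "sum_d (modified_set j d) m = sum_d d m + (\<Sum>i\<in>nondiv_idx j d m. (j - 1) * d i)"
proof -
  define N where "N = nondiv_idx j d m"
  have Nsub: "N \<subseteq> {..<m}" unfolding N_def nondiv_idx_def by auto
  have "sum_d (modified_set j d) m = (\<Sum>i<m. d i + (if i \<in> N then (j - 1) * d i else 0))"
    unfolding sum_d_def modified_set_def N_def nondiv_idx_def
  proof (intro sum.cong refl)
    fix i assume "i \<in> {..<m}"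
    show "(if j dvd d i then d i else j * d i) = d i + (if i \<in> {i. i < m \<and> \<not> j dvd d i} then (j - 1) * d i else 0)"
      using \<open>i \<in> {..<m}\<close> assms by (cases j) auto
  qed
  also have "\<dots> = sum_d d m + (\<Sum>i<m. if i \<in> N then (j - 1) * d i else 0)"
    unfolding sum_d_def sum.distrib ..
  also have "(\<Sum>i<m. if i \<in> N then (j - 1) * d i else 0) = (\<Sum>i\<in>N. if i \<in> N then (j - 1) * d i else 0)"
    using Nsub by (intro sum.mono_neutral_right) auto
  also have "\<dots> = (\<Sum>i\<in>N. (j - 1) * d i)" by simp
  finally show ?thesis unfolding N_def .
qed

lemma wave12:
  assumes j: "j \<ge> 1"
  shows "wave_formula1 j s d m = wave_formula2 j s d m"
proof -
  define N where "N = nondiv_idx j d m"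
  have finN: "finite N" unfolding N_def nondiv_idx_def by auto
  define fl where "fl r = (\<lambda>i. if i \<in> N then j - 1 - r i else undefined)" for r :: "nat \<Rightarrow> nat"
  define C where "C = 1 / (of_real (fact (m - 1)) * of_nat (prod_d d m) * of_nat j ^ card N :: complex)"
  have f1: "wave_formula1 j s d m = (\<Sum>r\<in>PiE N (\<lambda>_. {0..<j}).
      C * (of_real (bernoulli_higher (m - 1)
                    (real_of_int s + real (sum_d d m) + real (\<Sum>i\<in>N. d i * r i))
                    (modified_set j d) m) *
         prime_radical_circulator j (s + int (\<Sum>i\<in>N. d i * (r i + 1)))))"
    unfolding wave_formula1_def Let_def N_def[symmetric] C_def sum_distrib_left ..
  have f2: "wave_formula2 j s d m = (\<Sum>r\<in>PiE N (\<lambda>_. {0..<j}).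
         of_real (W1 (real_of_int (s - int (\<Sum>i\<in>N. d i * r i))) (modified_set j d) m) *
         prime_radical_circulator j (s - int (\<Sum>i\<in>N. d i * r i)))"
    unfolding wave_formula2_def Let_def N_def[symmetric] ..
  show ?thesis unfolding f1 f2
  proof (rule sym, rule sum.reindex_bij_witness[of _ fl fl])
    fix r assume r: "r \<in> PiE N (\<lambda>_. {0..<j})"
    have rl: "i \<in> N \<Longrightarrow> r i < j" for i using r by auto
    have ru: "i \<notin> N \<Longrightarrow> r i = undefined" for i using r by auto
    have ff: "fl (fl r) = r"
    proof (rule ext)
      fix i show "fl (fl r) i = r i" using rl[of i] ru[of i] by (auto simp: fl_def)
    qed
    show "fl (fl r) = r" "fl (fl r) = r" using ff by auto
    show "fl r \<in> PiE N (\<lambda>_. {0..<j})" "fl r \<in> PiE N (\<lambda>_. {0..<j})"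
      using rl j unfolding fl_def by auto
    define R where "R = (\<Sum>i\<in>N. d i * r i)"
    define D where "D = (\<Sum>i\<in>N. d i)"
    have s1: "(\<Sum>i\<in>N. d i * fl r i) + R = (\<Sum>i\<in>N. (j - 1) * d i)"
      unfolding R_def sum.distrib[symmetric]
    proof (intro sum.cong refl)
      fix i assume i: "i \<in> N"
      hence "j - 1 - r i + r i = j - 1" using rl[of i] by arith
      hence "d i * (j - 1 - r i) + d i * r i = (j - 1) * d i" by (metis distrib_left mult.commute)
      thus "d i * fl r i + d i * r i = (j - 1) * d i" unfolding fl_def using i by simp
    qed
    have s2: "(\<Sum>i\<in>N. d i * (fl r i + 1)) + R = j * D"
      unfolding R_def D_def sum.distrib[symmetric] sum_distrib_left
    proof (intro sum.cong refl)
      fix i assume i: "i \<in> N"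
      hence "j - 1 - r i + 1 + r i = j" using rl[of i] by arith
      hence "d i * (j - 1 - r i + 1) + d i * r i = j * d i" by (metis distrib_left mult.commute)
      thus "d i * (fl r i + 1) + d i * r i = j * d i" unfolding fl_def using i by simp
    qed
    have arg: "real_of_int s + real (sum_d d m) + real (\<Sum>i\<in>N. d i * fl r i) =
               real_of_int (s - int R) + real (sum_d (modified_set j d) m)"
    proof -
      have "sum_d d m + (\<Sum>i\<in>N. (j - 1) * d i) = sum_d d m + (\<Sum>i\<in>N. d i * fl r i) + R"
        using s1 by simp
      hence "real (sum_d d m + (\<Sum>i\<in>N. (j - 1) * d i)) = real (sum_d d m) + real (\<Sum>i\<in>N. d i * fl r i) + real R"
        by (metis of_nat_add)
      thus ?thesis unfolding sum_modified[OF j] N_def[symmetric] by simp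
    qed
    have psi: "prime_radical_circulator j (s + int (\<Sum>i\<in>N. d i * (fl r i + 1))) =
               prime_radical_circulator j (s - int R)"
    proof -
      have eq: "s + int (\<Sum>i\<in>N. d i * (fl r i + 1)) = (s - int R) + int j * int D"
        using arg_cong[OF s2, of int] by simp
      show ?thesis unfolding eq by (rule psi_period[OF j])
    qed
    show "C * (of_real (bernoulli_higher (m - 1)
                    (real_of_int s + real (sum_d d m) + real (\<Sum>i\<in>N. d i * fl r i))
                    (modified_set j d) m) *
         prime_radical_circulator j (s + int (\<Sum>i\<in>N. d i * (fl r i + 1)))) =
         of_real (W1 (real_of_int (s - int (\<Sum>i\<in>N. d i * r i))) (modified_set j d) m) *
         prime_radical_circulator j (s - int (\<Sum>i\<in>N. d i * r i))"
      unfolding arg psi R_def[symmetric] W1_def C_def prod_modified N_def[symmetric]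
      by (simp add: field_simps)
  qed
qed

definition Rf :: "int \<Rightarrow> (nat \<Rightarrow> nat) \<Rightarrow> nat \<Rightarrow> complex \<Rightarrow> complex" where
  "Rf s d m z = (\<Prod>k<m. inverse (1 - z ^ d k)) / z ^ Suc (nat s)"

lemma Rf_res0:
  assumes "\<And>i. i < m \<Longrightarrow> d i > 0"
  shows "residue (Rf (int s) d m) 0 = restricted_partition d m s"
proof -
  have "(\<lambda>z::complex. \<Prod>k<m. inverse (1 - z ^ d k)) has_fps_expansion (\<Prod>k<m. inverse (1 - fps_X ^ d k))"
  proof (rule has_fps_expansion_prod)
    fix k assume "k \<in> {..<m}"
    hence dk: "d k > 0" using assms by auto
    show "(\<lambda>z::complex. inverse (1 - z ^ d k)) has_fps_expansion inverse (1 - fps_X ^ d k)"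
      by (rule has_fps_expansion_inverse, intro fps_expansion_intros) (use dk in simp)
  qed
  from residue_fps_expansion_over_power_at_0[OF this, of s] show ?thesis
    unfolding Rf_def[abs_def] restricted_partition_def by simp
qed

lemma Rf_laurent:
  "(\<lambda>x. Rf s d m (p + x)) has_laurent_expansion
     (\<Prod>k<m. inverse (1 - (fls_const p + fls_X) ^ d k)) / (fls_const p + fls_X) ^ Suc (nat s)"
  unfolding Rf_def by (intro laurent_expansion_intros)


lemma Rf_pointwise:
  assumes p: "p \<noteq> 0"
  shows "Rf (int s) d m (p + p * (exp (- t) - 1)) * (- p * exp (- t)) = - sylv_term p (int s) d m t"
proof -
  define w where "w = p * exp (- t)"
  have w0: "w \<noteq> 0" unfolding w_def using p by simp
  have pw: "p + p * (exp (- t) - 1) = w" unfolding w_def by (simp add: algebra_simps)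
  have wd: "w ^ k = p ^ k * exp (- of_nat k * t)" for k
    unfolding w_def by (simp add: power_mult_distrib exp_of_nat_mult[symmetric])
  have ws: "inverse (w ^ s) = p powi (- int s) * exp (of_int (int s) * t)"
  proof -
    have "w ^ s * (p powi (- int s) * exp (of_int (int s) * t)) = 1"
      unfolding wd using p by (simp add: power_int_minus exp_add[symmetric] field_simps)
    thus ?thesis using w0 by (metis inverse_unique)
  qed
  have "Rf (int s) d m w * (- w) = - ((\<Prod>k<m. inverse (1 - w ^ d k)) * inverse (w ^ s))"
    unfolding Rf_def using w0 by (simp add: field_simps)
  also have "\<dots> = - sylv_term p (int s) d m t"
    unfolding sylv_term_def ws unfolding wd by (simp add: divide_inverse prod_inversef[symmetric] o_def mult_ac)
  finally show ?thesis unfolding pw w_def by simp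
qed

lemma Rf_res_root:
  assumes p: "p \<noteq> 0"
  shows "residue (Rf (int s) d m) p = - fls_residue (sylv_fls p (int s) d m)"
proof -
  define G where "G = fps_const p * (fps_exp (- 1) - 1)"
  have g: "(\<lambda>t. p * (exp (- t) - 1)) has_fps_expansion G"
    unfolding G_def by (intro fps_expansion_intros)
  have G0: "G $ 0 = 0" unfolding G_def by simp
  have G1: "G $ 1 \<noteq> 0" unfolding G_def using p by simp
  have dG: "fps_deriv G = fps_const (- p) * fps_exp (- 1)"
    unfolding G_def by (simp add: fps_exp_deriv)
  have g': "(\<lambda>t. - p * exp (- t)) has_fps_expansion fps_deriv G"
    unfolding dG by (intro fps_expansion_intros)
  have "residue (\<lambda>t. Rf (int s) d m (p + p * (exp (- t) - 1)) * (- p * exp (- t))) 0 = residue (Rf (int s) d m) p"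
    by (rule residue_change_var[OF Rf_laurent g G0 G1 g'])
  moreover have "(\<lambda>t. Rf (int s) d m (p + p * (exp (- t) - 1)) * (- p * exp (- t))) = (\<lambda>t. - sylv_term p (int s) d m t)"
    using Rf_pointwise[OF p] by auto
  moreover have "residue (\<lambda>t. - sylv_term p (int s) d m t) 0 = - fls_residue (sylv_fls p (int s) d m)"
    using has_laurent_expansion_residue_0[OF has_laurent_expansion_minus[OF sylv_laurent]] by simp
  ultimately show ?thesis by simp
qed

lemma norm_root_unity: "norm (root_unity j n) = 1"
proof -
  have "2 * of_real pi * \<i> * of_nat n / of_nat j = \<i> * of_real (2 * pi * n / j)" by simp
  thus ?thesis unfolding root_unity_def by (simp only: norm_exp_i_times)
qed

lemma root_unity_power: "root_unity j n ^ k = exp (2 * of_real pi * \<i> * of_nat (n * k) / of_nat j)"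
  unfolding root_unity_def exp_of_nat_mult[symmetric] by (simp add: field_simps)

lemma root_unity_power_1:
  assumes "j \<ge> 1"
  shows "root_unity j n ^ k = 1 \<longleftrightarrow> j dvd n * k"
  unfolding root_unity_power by (rule complex_root_unity_eq_1[OF assms])

lemma root_unity_inj:
  assumes j: "j \<ge> 1" "j' \<ge> 1" and n: "n \<in> prim_idx j" "n' \<in> prim_idx j'"
    and eq: "root_unity j n = root_unity j' n'"
  shows "j = j' \<and> n = n'"
proof -
  have c1: "coprime n j" "n < j" and c2: "coprime n' j'" "n' < j'" using n unfolding prim_idx_def by auto
  have "root_unity j n ^ j' = 1" unfolding eq using root_unity_power_1[OF j(2)] by simp
  hence "j dvd n * j'" using root_unity_power_1[OF j(1)] by simp
  hence d1: "j dvd j'" using c1 by (metis coprime_commute coprime_dvd_mult_right_iff)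
  have "root_unity j' n' ^ j = 1" unfolding eq[symmetric] using root_unity_power_1[OF j(1)] by simp
  hence "j' dvd n' * j" using root_unity_power_1[OF j(2)] by simp
  hence d2: "j' dvd j" using c2 by (metis coprime_commute coprime_dvd_mult_right_iff)
  have jj: "j = j'" using d1 d2 by (simp add: dvd_antisym)
  have "n mod j = n' mod j" using eq unfolding root_unity_def jj
    using complex_root_unity_eq[OF j(2)] jj by simp
  thus ?thesis using c1 c2 jj by simp
qed

lemma root_in_Pts:
  fixes z :: complex
  assumes z: "z ^ c = 1" and c: "c > 0"
  shows "\<exists>J A. J > 0 \<and> J dvd c \<and> A \<in> prim_idx J \<and> z = root_unity J A"
proof -
  have "z \<in> {z::complex. z ^ c = 1}" using z by simp
  then obtain a where a: "a < c" "z = exp (2 * of_real pi * \<i> * of_nat a / of_nat c)"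
    using complex_roots_unity[of c] c by auto
  define g where "g = gcd a c"
  have g0: "g > 0" unfolding g_def using c by simp
  define J where "J = c div g"
  define A where "A = a div g"
  have cJ: "c = J * g" unfolding J_def g_def by simp
  have aA: "a = A * g" unfolding A_def g_def by simp
  have J0: "J > 0" using cJ c by (metis gr0I mult_0)
  have Jd: "J dvd c" using cJ by simp
  have cop: "coprime A J" unfolding A_def J_def g_def using c
    by (metis div_gcd_coprime gcd_eq_0_iff neq0_conv)
  have AJ: "A < J" using a(1) aA cJ g0 by (metis mult_less_cancel2)
  have "of_nat a / of_nat c = (of_nat A / of_nat J :: complex)"
    unfolding aA cJ using g0 by (simp add: field_simps)
  hence "2 * of_real pi * \<i> * of_nat a / of_nat c = 2 * of_real pi * \<i> * of_nat A / (of_nat J :: complex)"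
    by (metis times_divide_eq_right)
  hence "z = root_unity J A" unfolding a(2) root_unity_def by simp
  thus ?thesis using J0 Jd cop AJ unfolding prim_idx_def by blast
qed

lemma norm_one_minus_pow:
  fixes x :: complex
  assumes "norm x = r" "r \<ge> 2" "c > 0"
  shows "norm (1 - x ^ c) \<ge> r - 1"
proof -
  have "r \<le> r ^ c" using assms by (intro self_le_power) auto
  also have "r ^ c = norm (x ^ c)" using assms by (simp add: norm_power)
  also have "norm (x ^ c) \<le> norm (1 - x ^ c) + 1"
    using norm_triangle_ineq2[of "x ^ c" 1] by (simp add: norm_minus_commute)
  finally show ?thesis by simp
qed

lemma Rf_bound:
  assumes m: "m \<ge> 1" and d: "\<And>i. i < m \<Longrightarrow> d i > 0" and r: "r \<ge> 2" and x: "norm x = r"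
  shows "norm (Rf (int s) d m x) \<le> 2 / r\<^sup>2"
proof -
  have b1: "norm (inverse (1 - x ^ d k)) \<le> 1" if "k < m" for k
  proof -
    have "1 \<le> norm (1 - x ^ d k)" using norm_one_minus_pow[OF x r d[OF that]] r by linarith
    thus ?thesis by (simp add: norm_inverse inverse_le_1_iff)
  qed
  have b2: "norm (inverse (1 - x ^ d k)) \<le> 2 / r" if "k < m" for k
  proof -
    have "r / 2 \<le> norm (1 - x ^ d k)" using norm_one_minus_pow[OF x r d[OF that]] r by linarith
    hence "inverse (norm (1 - x ^ d k)) \<le> inverse (r / 2)" using r by (intro le_imp_inverse_le) auto
    thus ?thesis by (simp add: norm_inverse)
  qed
  obtain m' where m': "m = Suc m'" using m by (cases m) auto
  have "norm (\<Prod>k<m. inverse (1 - x ^ d k)) = (\<Prod>k<m. norm (inverse (1 - x ^ d k)))"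
    by (rule prod_norm[symmetric])
  also have "\<dots> = norm (inverse (1 - x ^ d 0)) * (\<Prod>k<m'. norm (inverse (1 - x ^ d (Suc k))))"
    unfolding m' by (rule prod.lessThan_Suc_shift)
  also have "\<dots> \<le> 2 / r * 1"
    using b2[of 0] b1 m' r by (intro mult_mono prod_le_1 prod_nonneg) auto
  finally have P: "norm (\<Prod>k<m. inverse (1 - x ^ d k)) \<le> 2 / r" by simp
  have "r \<le> r ^ Suc (nat (int s))" using r by (intro self_le_power) auto
  hence Q: "inverse (norm (x ^ Suc (nat (int s)))) \<le> inverse r"
  proof -
    have "norm (x ^ Suc (nat (int s))) = r ^ Suc (nat (int s))" by (simp only: norm_power x)
    thus ?thesis using \<open>r \<le> _\<close> r by (intro le_imp_inverse_le) auto
  qed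
  have "norm (Rf (int s) d m x) = norm (\<Prod>k<m. inverse (1 - x ^ d k)) * inverse (norm (x ^ Suc (nat (int s))))"
    unfolding Rf_def by (simp only: divide_inverse norm_mult norm_inverse)
  also have "\<dots> \<le> 2 / r * inverse r"
    using P Q r by (intro mult_mono) auto
  also have "\<dots> = 2 / r\<^sup>2" by (simp add: power2_eq_square field_simps)
  finally show ?thesis .
qed


lemma finite_wave_indices:
  assumes "\<And>i. i < m \<Longrightarrow> d i > 0"
  shows "finite (wave_indices d m)"
proof (rule finite_subset)
  show "wave_indices d m \<subseteq> {..sum_d d m}"
  proof
    fix j assume "j \<in> wave_indices d m"
    then obtain i where i: "i < m" "j dvd d i" unfolding wave_indices_def by auto
    have "j \<le> d i" using i assms[OF i(1)] by (simp add: dvd_imp_le)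
    also have "d i \<le> sum_d d m" unfolding sum_d_def using i(1) by (intro member_le_sum) auto
    finally show "j \<in> {..sum_d d m}" by simp
  qed
qed auto

lemma finite_prim_idx: "finite (prim_idx j)"
  unfolding prim_idx_def by auto

lemma residues_sum_zero:
  fixes f :: "complex \<Rightarrow> complex" and pts :: "complex set"
  assumes fin: "finite pts" and holo: "f holomorphic_on (UNIV - pts)"
    and small: "\<And>p. p \<in> pts \<Longrightarrow> norm p \<le> 1"
    and bound: "\<And>r x. r \<ge> 2 \<Longrightarrow> norm x = r \<Longrightarrow> norm (f x) \<le> 2 / r\<^sup>2"
  shows "(\<Sum>p\<in>pts. residue f p) = 0"
proof -
  define S where "S = (\<Sum>p\<in>pts. residue f p)"
  have key: "norm S \<le> 2 / r" if r: "r \<ge> 2" for r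
  proof -
    have op: "open (UNIV - pts)" using fin by (simp add: open_Diff finite_imp_closed)
    have img: "path_image (circlepath 0 r) \<subseteq> UNIV - pts"
    proof
      fix x assume "x \<in> path_image (circlepath 0 r)"
      hence "norm x = r" using r by (simp add: path_image_circlepath)
      thus "x \<in> UNIV - pts" using small r by force
    qed
    have "contour_integral (circlepath 0 r) f =
            complex_of_real (2 * pi) * \<i> * (\<Sum>p\<in>pts. winding_number (circlepath 0 r) p * residue f p)"
      by (rule Residue_theorem[OF open_UNIV connected_UNIV fin holo]) (use img in auto)
    also have "(\<Sum>p\<in>pts. winding_number (circlepath 0 r) p * residue f p) = S"
      unfolding S_def
    proof (intro sum.cong refl)
      fix p assume "p \<in> pts"
      hence "norm (p - 0) < r" using small r by force
      thus "winding_number (circlepath 0 r) p * residue f p = residue f p"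
        by (simp add: winding_number_circlepath)
    qed
    finally have ci: "contour_integral (circlepath 0 r) f = complex_of_real (2 * pi) * \<i> * S" .
    have "f contour_integrable_on (circlepath 0 r)"
      by (rule contour_integrable_holomorphic_simple[OF holo op]) (use img r in auto)
    hence hi: "(f has_contour_integral (complex_of_real (2 * pi) * \<i> * S)) (circlepath 0 r)"
      using ci has_contour_integral_integral by metis
    have "norm (complex_of_real (2 * pi) * \<i> * S) \<le> 2 / r\<^sup>2 * (2 * pi * r)"
      by (rule has_contour_integral_bound_circlepath[OF hi]) (use r bound in auto)
    hence "2 * pi * norm S \<le> 2 / r\<^sup>2 * (2 * pi * r)" by (simp add: norm_mult)
    also have "\<dots> = 2 * pi * (2 / r)" using r by (simp add: power2_eq_square field_simps)
    finally have "2 * pi * norm S \<le> 2 * pi * (2 / r)" .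
    thus ?thesis by (rule mult_left_le_imp_le) (use pi_gt_zero in simp)
  qed
  show ?thesis unfolding S_def[symmetric]
  proof (rule ccontr)
    assume "S \<noteq> 0"
    hence pos: "norm S > 0" by simp
    define r where "r = max 2 (4 / norm S)"
    have "norm S \<le> 2 / r" using key[of r] unfolding r_def by simp
    also have "2 / r \<le> 2 / (4 / norm S)" unfolding r_def using pos
      by (intro divide_left_mono) (auto simp: max_def)
    also have "\<dots> = norm S / 2" using pos by simp
    finally show False using pos by simp
  qed
qed


lemma partition_sum:
  assumes m: "m \<ge> 1" and d: "\<And>i. i < m \<Longrightarrow> d i > 0"
  shows "restricted_partition d m s = (\<Sum>j\<in>wave_indices d m. sylvester_wave j (int s) d m)"
proof -
  define W where "W = wave_indices d m"
  define Sg where "Sg = (SIGMA j:W. prim_idx j)"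
  define Pts where "Pts = (\<lambda>(j, n). root_unity j n) ` Sg"
  define f where "f = Rf (int s) d m"
  have finW: "finite W" unfolding W_def by (rule finite_wave_indices) (rule d)
  have finSg: "finite Sg" unfolding Sg_def using finW finite_prim_idx by auto
  have finPts: "finite Pts" unfolding Pts_def using finSg by simp
  have W1: "j \<in> W \<Longrightarrow> j \<ge> 1" for j unfolding W_def wave_indices_def by auto
  have normP: "norm p = 1" if "p \<in> Pts" for p using that unfolding Pts_def by (auto simp: norm_root_unity)
  have zP: "0 \<notin> Pts" using normP by force
  have inj: "inj_on (\<lambda>(j, n). root_unity j n) Sg"
  proof (rule inj_onI, clarify)
    fix j n j' n' assume "(j, n) \<in> Sg" "(j', n') \<in> Sg" "root_unity j n = root_unity j' n'"
    thus "j = j' \<and> n = n'" unfolding Sg_def using W1 by (intro root_unity_inj) auto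
  qed
  have holo: "f holomorphic_on (UNIV - insert 0 Pts)"
  proof -
    have nz: "1 - z ^ d k \<noteq> 0" if z: "z \<in> UNIV - insert 0 Pts" and k: "k < m" for z k
    proof
      assume "1 - z ^ d k = 0"
      hence "z ^ d k = 1" by simp
      then obtain J A where JA: "J > 0" "J dvd d k" "A \<in> prim_idx J" "z = root_unity J A"
        using root_in_Pts[of z "d k"] d[OF k] by blast
      have "J \<in> W" unfolding W_def wave_indices_def using JA k by auto
      hence "z \<in> Pts" unfolding Pts_def Sg_def using JA by force
      thus False using z by simp
    qed
    have nz0: "z ^ Suc (nat (int s)) \<noteq> 0" if "z \<in> UNIV - insert 0 Pts" for z using that by simp
    show ?thesis unfolding f_def Rf_def[abs_def]
      by (intro holomorphic_intros) (use nz nz0 in auto)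
  qed
  have "(\<Sum>p\<in>insert 0 Pts. residue f p) = 0"
  proof (rule residues_sum_zero[OF _ holo])
    show "finite (insert 0 Pts)" using finPts by simp
    show "norm p \<le> 1" if "p \<in> insert 0 Pts" for p using that normP by auto
    show "norm (f x) \<le> 2 / r\<^sup>2" if "r \<ge> 2" "norm x = r" for r x
      unfolding f_def by (rule Rf_bound[OF m d that])
  qed
  hence "residue f 0 = - (\<Sum>p\<in>Pts. residue f p)"
    using finPts zP by (simp add: add_eq_0_iff)
  also have "(\<Sum>p\<in>Pts. residue f p) = (\<Sum>(j, n)\<in>Sg. residue f (root_unity j n))"
    unfolding Pts_def by (subst sum.reindex[OF inj]) (simp add: case_prod_unfold)
  also have "\<dots> = (\<Sum>(j, n)\<in>Sg. - fls_residue (sylv_fls (root_unity j n) (int s) d m))"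
    unfolding f_def using Rf_res_root[OF root_unity_nz] by (intro sum.cong refl) (auto split: prod.splits)
  also have "\<dots> = - (\<Sum>j\<in>W. \<Sum>n\<in>prim_idx j. fls_residue (sylv_fls (root_unity j n) (int s) d m))"
    unfolding Sg_def by (subst sum.Sigma[symmetric]) (auto simp: finW finite_prim_idx sum_negf)
  also have "\<dots> = - (\<Sum>j\<in>W. sylvester_wave j (int s) d m)"
    by (simp add: sylvester_wave_eq)
  moreover have "residue (Rf (int s) d m) 0 = restricted_partition d m s" by (rule Rf_res0) (rule d)
  ultimately show ?thesis unfolding f_def W_def by simp
qed

theorem mainTheorem1:
  fixes d :: "nat \<Rightarrow> nat" and m :: nat and s :: nat
  assumes "m \<ge> 1"
    and "\<And>i. i < m \<Longrightarrow> d i > 0"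
  shows "restricted_partition d m s = (\<Sum>j\<in>wave_indices d m. sylvester_wave j (int s) d m)
    \<and> (\<forall>j\<in>wave_indices d m.
          sylvester_wave j (int s) d m = wave_formula1 j (int s) d m
        \<and> sylvester_wave j (int s) d m = wave_formula2 j (int s) d m)"
proof (intro conjI ballI)
  show "restricted_partition d m s = (\<Sum>j\<in>wave_indices d m. sylvester_wave j (int s) d m)"
    by (rule partition_sum) (use assms in auto)
next
  fix j assume "j \<in> wave_indices d m"
  hence j: "j \<ge> 1" unfolding wave_indices_def by auto
  have w2: "sylvester_wave j (int s) d m = wave_formula2 j (int s) d m"
    by (rule wave2[OF j assms(1)]) (use assms in auto)
  thus "sylvester_wave j (int s) d m = wave_formula2 j (int s) d m" .
  show "sylvester_wave j (int s) d m = wave_formula1 j (int s) d m"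
    using w2 wave12[OF j] by simp
qed

end
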